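(* Let $(G,\mathcal{P}_G)$ be a pinned graph and let $(H,\mathcal{P}_H)$ be a pinned subgraph of it. If $(G,\mathcal{P}_G)$ is $k$-admissible, then $(H,\mathcal{P}_H)$ is $k$-admissible.
   Context: A pinned graph $(G,\mathcal{P})$ is a finite simple graph $G=(\mathcal{V},\mathcal{E})$ together with a set $\mathcal{P}\subset\mathcal{V}$ of pinned vertices, no two of which are adjacent; $m=|\mathcal{P}|$. $(H,\mathcal{P}_H)$ is a pinned subgraph of $(G,\mathcal{P}_G)$ if $H$ is an induced subgraph of $G$ and $\mathcal{P}_H\subset\mathcal{P}_G$ (with $\mathcal{P}_H$ a set of vertices of $H$). A construction order is an ordering $v_1,\dots,v_l$ of $\mathcal{V}$ whose first $m$ entries are exactly the pinned vertices; for $i>m$ the back-degree of $v_i$ is the number of vertices among $v_1,\dots,v_{i-1}$ adjacent to $v_i$. $(G,\mathcal{P})$ is $k$-admissible ($k\ge0$ integer) if some construction order has all back-degrees (for $i>m$) at most $k$. *)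

theory Defs
  imports Main
begin

definition simple_graph :: "'a set \<Rightarrow> 'a set set \<Rightarrow> bool" where
  "simple_graph V E \<longleftrightarrow> finite V \<and> (\<forall>e\<in>E. card e = 2 \<and> e \<subseteq> V)"

definition pinned_graph :: "'a set \<Rightarrow> 'a set set \<Rightarrow> 'a set \<Rightarrow> bool" where
  "pinned_graph V E P \<longleftrightarrow> simple_graph V E \<and> P \<subseteq> V \<and>
     (\<forall>u\<in>P. \<forall>v\<in>P. {u, v} \<notin> E)"

definition pinned_subgraph ::
  "'a set \<Rightarrow> 'a set set \<Rightarrow> 'a set \<Rightarrow> 'a set \<Rightarrow> 'a set set \<Rightarrow> 'a set \<Rightarrow> bool" where
  "pinned_subgraph VH EH PH VG EG PG \<longleftrightarrow>
     VH \<subseteq> VG \<and> EH = {e\<in>EG. e \<subseteq> VH} \<and> PH \<subseteq> PG \<and> PH \<subseteq> VH"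

definition construction_order :: "'a set \<Rightarrow> 'a set \<Rightarrow> 'a list \<Rightarrow> bool" where
  "construction_order V P vs \<longleftrightarrow>
     distinct vs \<and> set vs = V \<and> set (take (card P) vs) = P"

definition back_degree :: "'a set set \<Rightarrow> 'a list \<Rightarrow> nat \<Rightarrow> nat" where
  "back_degree E vs i = card {j. j < i \<and> {vs ! j, vs ! i} \<in> E}"

definition k_admissible :: "nat \<Rightarrow> 'a set \<Rightarrow> 'a set set \<Rightarrow> 'a set \<Rightarrow> bool" where
  "k_admissible k V E P \<longleftrightarrow>
     (\<exists>vs. construction_order V P vs \<and>
        (\<forall>i. card P \<le> i \<and> i < length vs \<longrightarrow> back_degree E vs i \<le> k))"

end

theory Submission
  imports Defs
begin

lemma takeWhile_nth_take:
  "distinct xs \<Longrightarrow> i < length xs \<Longrightarrow> takeWhile (\<lambda>x. x \<noteq> xs!i) xs = take i xs"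
proof (induction xs arbitrary: i)
  case Nil then show ?case by simp
next
  case (Cons a xs)
  show ?case
  proof (cases i)
    case 0 then show ?thesis by simp
  next
    case (Suc j)
    then have "xs ! j \<noteq> a" using Cons.prems by (auto simp: nth_mem)
    then show ?thesis using Cons Suc by simp
  qed
qed

lemma takeWhile_filter:
  "P w \<Longrightarrow> takeWhile (\<lambda>x. x \<noteq> w) (filter P xs) = filter P (takeWhile (\<lambda>x. x \<noteq> w) xs)"
  by (induction xs) auto

lemma bd_set:
  assumes "distinct vs" "i < length vs"
  shows "back_degree E vs i = card {u \<in> set (takeWhile (\<lambda>x. x \<noteq> vs!i) vs). {u, vs!i} \<in> E}"
proof -
  have "bij_betw (\<lambda>j. vs!j) {j. j < i \<and> {vs ! j, vs ! i} \<in> E}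
          {u \<in> set (take i vs). {u, vs!i} \<in> E}"
    unfolding bij_betw_def
  proof
    show "inj_on (\<lambda>j. vs!j) {j. j < i \<and> {vs ! j, vs ! i} \<in> E}"
      using assms by (auto simp: inj_on_def nth_eq_iff_index_eq)
    show "(\<lambda>j. vs!j) ` {j. j < i \<and> {vs ! j, vs ! i} \<in> E} = {u \<in> set (take i vs). {u, vs!i} \<in> E}"
      using assms by (auto simp: in_set_conv_nth)
  qed
  then show ?thesis unfolding back_degree_def
    using takeWhile_nth_take[OF assms] by (simp add: bij_betw_same_card)
qed

theorem lemma4p2:
  fixes VG VH :: "'a set" and EG EH :: "'a set set" and PG PH :: "'a set" and k :: nat
  assumes "pinned_graph VG EG PG"
    and "pinned_subgraph VH EH PH VG EG PG"
    and "k_admissible k VG EG PG"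
  shows "k_admissible k VH EH PH"
proof -
  have VH: "VH \<subseteq> VG" and EH: "EH = {e\<in>EG. e \<subseteq> VH}" and PH: "PH \<subseteq> PG" "PH \<subseteq> VH"
    using assms(2) unfolding pinned_subgraph_def by auto
  have nadj: "\<And>u v. u \<in> PG \<Longrightarrow> v \<in> PG \<Longrightarrow> {u, v} \<notin> EG"
    using assms(1) unfolding pinned_graph_def by auto
  obtain vs where co: "construction_order VG PG vs"
    and bdk: "\<And>i. card PG \<le> i \<Longrightarrow> i < length vs \<Longrightarrow> back_degree EG vs i \<le> k"
    using assms(3) unfolding k_admissible_def by auto
  have dvs: "distinct vs" and svs: "set vs = VG" and tvs: "set (take (card PG) vs) = PG"
    using co unfolding construction_order_def by auto
  define A where "A = filter (\<lambda>x. x \<in> PH) vs"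
  define Q where "Q = (\<lambda>x. x \<in> VH \<and> x \<notin> PH)"
  define B where "B = filter Q vs"
  define ws where "ws = A @ B"
  have sA: "set A = PH" using PH VH svs unfolding A_def by auto
  have dA: "distinct A" unfolding A_def using dvs by simp
  have lA: "length A = card PH" using distinct_card[OF dA] sA by simp
  have dws: "distinct ws" unfolding ws_def A_def B_def Q_def using dvs by auto
  have sws: "set ws = VH" unfolding ws_def A_def B_def Q_def using svs PH VH by auto
  have cws: "construction_order VH PH ws"
    unfolding construction_order_def using dws sws lA sA by (simp add: ws_def)
  have "back_degree EH ws i \<le> k" if i: "card PH \<le> i" "i < length ws" for i
  proof -
    define w where "w = ws ! i"
    have wB: "w = B ! (i - length A)" "i - length A < length B"
      using i lA unfolding w_def ws_def by (auto simp: nth_append)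
    hence wBs: "w \<in> set B" by (simp add: nth_mem)
    hence Qw: "Q w" and wvs: "w \<in> set vs" unfolding B_def by auto
    have wnA: "w \<notin> set A" using Qw sA unfolding Q_def by auto
    have tw: "takeWhile (\<lambda>x. x \<noteq> w) ws = A @ filter Q (takeWhile (\<lambda>x. x \<noteq> w) vs)"
    proof -
      have "\<And>x. x \<in> set A \<Longrightarrow> x \<noteq> w" using wnA by auto
      hence "takeWhile (\<lambda>x. x \<noteq> w) (A @ filter Q vs) = A @ takeWhile (\<lambda>x. x \<noteq> w) (filter Q vs)"
        by (rule takeWhile_append2)
      thus ?thesis using takeWhile_filter[of Q w vs] Qw by (simp add: ws_def B_def)
    qed
    have bdH: "back_degree EH ws i = card {u \<in> set (takeWhile (\<lambda>x. x \<noteq> w) ws). {u, w} \<in> EH}"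
      using bd_set[OF dws i(2)] unfolding w_def by simp
    obtain i' where i': "i' < length vs" "vs ! i' = w" using wvs by (auto simp: in_set_conv_nth)
    have twv: "takeWhile (\<lambda>x. x \<noteq> w) vs = take i' vs"
      using takeWhile_nth_take[OF dvs i'(1)] i'(2) by simp
    show ?thesis
    proof (cases "w \<in> PG")
      case True
      have "i' < card PG"
      proof (rule ccontr)
        assume "\<not> i' < card PG"
        hence "set (take (card PG) vs) \<subseteq> set (take i' vs)" by (simp add: set_take_subset_set_take)
        moreover have "w \<notin> set (take i' vs)" using twv by (metis (mono_tags) set_takeWhileD)
        ultimately show False using True tvs by auto
      qed
      hence "set (take i' vs) \<subseteq> PG" using tvs by (metis nat_less_le set_take_subset_set_take)
      hence "set (takeWhile (\<lambda>x. x \<noteq> w) ws) \<subseteq> PG" using tw twv sA PH by auto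
      hence "{u \<in> set (takeWhile (\<lambda>x. x \<noteq> w) ws). {u, w} \<in> EH} = {}"
        using nadj True EH by auto
      thus ?thesis using bdH by (metis (no_types, lifting) card.empty zero_le)
    next
      case False
      have "card PG \<le> i'"
      proof (rule ccontr)
        assume "\<not> card PG \<le> i'"
        hence "w \<in> set (take (card PG) vs)" using i' by (auto simp: in_set_conv_nth)
        thus False using False tvs by simp
      qed
      hence "set (take (card PG) vs) \<subseteq> set (take i' vs)" by (simp add: set_take_subset_set_take)
      hence "set (takeWhile (\<lambda>x. x \<noteq> w) ws) \<subseteq> set (take i' vs)"
        using tw twv sA PH tvs by auto
      hence sub: "{u \<in> set (takeWhile (\<lambda>x. x \<noteq> w) ws). {u, w} \<in> EH}
              \<subseteq> {u \<in> set (takeWhile (\<lambda>x. x \<noteq> vs!i') vs). {u, vs!i'} \<in> EG}"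
        using EH twv i'(2) by auto
      have "back_degree EH ws i \<le> back_degree EG vs i'"
        unfolding bdH bd_set[OF dvs i'(1)]
        by (rule card_mono[OF _ sub]) simp
      also have "\<dots> \<le> k" using bdk[OF \<open>card PG \<le> i'\<close> i'(1)] .
      finally show ?thesis .
    qed
  qed
  thus ?thesis unfolding k_admissible_def using cws by blast
qed

end
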